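(* Let $(X,d)$ be a metric space and let $u,u_1,u_2,\ldots\in F_{USC}(X)$. Then: (i) $H_{\rm send}(u_n,u)\to0$ if and only if $H_{\rm end}(u_n,u)\to0$ and $H([u_n]_0,[u]_0)\to0$; (ii) ${\rm send}\,u_n$ Kuratowski converges to ${\rm send}\,u$ if and only if $u_n\stackrel{\Gamma}{\longrightarrow}u$ and $[u_n]_0$ Kuratowski converges to $[u]_0$.
   Context: A fuzzy set on $X$ is a function $u:X\to[0,1]$, with $\alpha$-cuts $[u]_\alpha=\{x: u(x)\ge\alpha\}$ for $\alpha\in(0,1]$ and $[u]_0=\overline{\{u>0\}}$. $F_{USC}(X)$ is the set of fuzzy sets with all $\alpha$-cuts ($\alpha\in[0,1]$) non-empty and closed. $X\times[0,1]$ is metrized by $\overline{d}((x,\alpha),(y,\beta))=d(x,y)+|\alpha-\beta|$. For non-empty closed sets $U,V$ in a metric space, $H(U,V)=\max\{\sup_{a\in U}\inf_{b\in V}\rho(a,b),\sup_{b\in V}\inf_{a\in U}\rho(a,b)\}$ is the Hausdorff distance ($\rho=d$ on $X$, $\rho=\overline{d}$ on $X\times[0,1]$). ${\rm end}\,u=\{(x,t)\in X\times[0,1]: u(x)\ge t\}$, ${\rm send}\,u={\rm end}\,u\cap([u]_0\times[0,1])$, $H_{\rm end}(u,v)=H({\rm end}\,u,{\rm end}\,v)$, $H_{\rm send}(u,v)=H({\rm send}\,u,{\rm send}\,v)$. For sets $C_n$: $\liminf_n C_n=\{x: x=\lim_n x_n, x_n\in C_n\}$, $\limsup_n C_n=\{x: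 x=\lim_j x_{n_j}, x_{n_j}\in C_{n_j}\}$; $C_n$ Kuratowski converges to $C$ if $C=\liminf_n C_n=\limsup_n C_n$. $u_n\stackrel{\Gamma}{\longrightarrow}u$ means ${\rm end}\,u_n$ Kuratowski converges to ${\rm end}\,u$. *)

theory Defs
  imports "HOL-Analysis.Analysis"
begin

definition fuzzy_set :: "('a \<Rightarrow> real) \<Rightarrow> bool" where
  "fuzzy_set u \<longleftrightarrow> (\<forall>x. 0 \<le> u x \<and> u x \<le> 1)"

definition cut :: "('a::topological_space \<Rightarrow> real) \<Rightarrow> real \<Rightarrow> 'a set" where
  "cut u \<alpha> = (if \<alpha> = 0 then closure {x. u x > 0} else {x. u x \<ge> \<alpha>})"

definition F_USC :: "('a::topological_space \<Rightarrow> real) set" where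
  "F_USC = {u. fuzzy_set u \<and> (\<forall>\<alpha>\<in>{0..1}. cut u \<alpha> \<noteq> {} \<and> closed (cut u \<alpha>))}"

definition endo :: "('a \<Rightarrow> real) \<Rightarrow> ('a \<times> real) set" where
  "endo u = {(x, t). t \<in> {0..1} \<and> u x \<ge> t}"

definition sendo :: "('a::topological_space \<Rightarrow> real) \<Rightarrow> ('a \<times> real) set" where
  "sendo u = endo u \<inter> (cut u 0 \<times> {0..1})"

definition hausdorff :: "('b \<Rightarrow> 'b \<Rightarrow> real) \<Rightarrow> 'b set \<Rightarrow> 'b set \<Rightarrow> ereal" where
  "hausdorff \<rho> U V = max (SUP a\<in>U. INF b\<in>V. ereal (\<rho> a b)) (SUP b\<in>V. INF a\<in>U. ereal (\<rho> a b))"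

definition dbar :: "('a::metric_space \<times> real) \<Rightarrow> ('a \<times> real) \<Rightarrow> real" where
  "dbar p q = dist (fst p) (fst q) + \<bar>snd p - snd q\<bar>"

definition H_end :: "('a::metric_space \<Rightarrow> real) \<Rightarrow> ('a \<Rightarrow> real) \<Rightarrow> ereal" where
  "H_end u v = hausdorff dbar (endo u) (endo v)"

definition H_send :: "('a::metric_space \<Rightarrow> real) \<Rightarrow> ('a \<Rightarrow> real) \<Rightarrow> ereal" where
  "H_send u v = hausdorff dbar (sendo u) (sendo v)"

definition kliminf :: "(nat \<Rightarrow> 'b::topological_space set) \<Rightarrow> 'b set" where
  "kliminf C = {x. \<exists>f. (\<forall>n. f n \<in> C n) \<and> f \<longlonglongrightarrow> x}"

definition klimsup :: "(nat \<Rightarrow> 'b::topological_space set) \<Rightarrow> 'b set" where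
  "klimsup C = {x. \<exists>r f. strict_mono r \<and> (\<forall>j. f j \<in> C (r j)) \<and> f \<longlonglongrightarrow> x}"

definition kuratowski_conv :: "(nat \<Rightarrow> 'b::topological_space set) \<Rightarrow> 'b set \<Rightarrow> bool" where
  "kuratowski_conv C A \<longleftrightarrow> A = kliminf C \<and> A = klimsup C"

definition gamma_conv :: "(nat \<Rightarrow> 'a::topological_space \<Rightarrow> real) \<Rightarrow> ('a \<Rightarrow> real) \<Rightarrow> bool" where
  "gamma_conv us u \<longleftrightarrow> kuratowski_conv (\<lambda>n. endo (us n)) (endo u)"

end

theory Submission
  imports Defs
begin

definition small :: "('b \<Rightarrow> 'b \<Rightarrow> real) \<Rightarrow> 'b set \<Rightarrow> 'b set \<Rightarrow> real \<Rightarrow> bool" where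
  "small \<rho> U V e \<longleftrightarrow> (\<forall>a\<in>U. \<exists>b\<in>V. \<rho> a b < e) \<and> (\<forall>b\<in>V. \<exists>a\<in>U. \<rho> a b < e)"

lemma small_imp_le:
  assumes "small \<rho> U V e"
  shows "hausdorff \<rho> U V \<le> ereal e"
  unfolding hausdorff_def
proof (rule max.boundedI)
  show "(SUP a\<in>U. INF b\<in>V. ereal (\<rho> a b)) \<le> ereal e"
  proof (rule SUP_least)
    fix a assume "a\<in>U"
    then obtain b where b: "b\<in>V" "\<rho> a b < e" using assms unfolding small_def by blast
    then have "(INF b\<in>V. ereal (\<rho> a b)) \<le> ereal (\<rho> a b)" by (intro INF_lower)
    also have "\<dots> \<le> ereal e" using b by simp
    finally show "(INF b\<in>V. ereal (\<rho> a b)) \<le> ereal e" .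
  qed
  show "(SUP b\<in>V. INF a\<in>U. ereal (\<rho> a b)) \<le> ereal e"
  proof (rule SUP_least)
    fix b assume "b\<in>V"
    then obtain a where a: "a\<in>U" "\<rho> a b < e" using assms unfolding small_def by blast
    then have "(INF a\<in>U. ereal (\<rho> a b)) \<le> ereal (\<rho> a b)" by (intro INF_lower)
    also have "\<dots> \<le> ereal e" using a by simp
    finally show "(INF a\<in>U. ereal (\<rho> a b)) \<le> ereal e" .
  qed
qed

lemma less_imp_small:
  assumes "hausdorff \<rho> U V < ereal e"
  shows "small \<rho> U V e"
  unfolding small_def
proof (intro conjI ballI)
  fix a assume "a \<in> U"
  have "(INF b\<in>V. ereal (\<rho> a b)) \<le> (SUP a\<in>U. INF b\<in>V. ereal (\<rho> a b))"
    using \<open>a\<in>U\<close> by (rule SUP_upper)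
  also have "\<dots> < ereal e" using assms unfolding hausdorff_def by simp
  finally show "\<exists>b\<in>V. \<rho> a b < e" by (simp add: INF_less_iff)
next
  fix b assume "b \<in> V"
  have "(INF a\<in>U. ereal (\<rho> a b)) \<le> (SUP b\<in>V. INF a\<in>U. ereal (\<rho> a b))"
    using \<open>b\<in>V\<close> by (rule SUP_upper)
  also have "\<dots> < ereal e" using assms unfolding hausdorff_def by simp
  finally show "\<exists>a\<in>U. \<rho> a b < e" by (simp add: INF_less_iff)
qed

lemma haus_nonneg:
  assumes "U \<noteq> {}" "\<And>a b. \<rho> a b \<ge> 0"
  shows "0 \<le> hausdorff \<rho> U V"
proof -
  obtain a where a: "a \<in> U" using assms by blast
  have "0 \<le> (INF b\<in>V. ereal (\<rho> a b))" by (rule INF_greatest) (simp add: assms)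
  also have "\<dots> \<le> (SUP a\<in>U. INF b\<in>V. ereal (\<rho> a b))" using a by (rule SUP_upper)
  also have "\<dots> \<le> hausdorff \<rho> U V" unfolding hausdorff_def by simp
  finally show ?thesis .
qed

lemma CH:
  assumes "\<And>n. U n \<noteq> {}" "\<And>a b. \<rho> a b \<ge> 0"
  shows "((\<lambda>n. hausdorff \<rho> (U n) (V n)) \<longlonglongrightarrow> 0) \<longleftrightarrow>
         (\<forall>e>0. eventually (\<lambda>n. small \<rho> (U n) (V n) e) sequentially)"
proof
  assume L: "(\<lambda>n. hausdorff \<rho> (U n) (V n)) \<longlonglongrightarrow> 0"
  show "\<forall>e>0. eventually (\<lambda>n. small \<rho> (U n) (V n) e) sequentially"
  proof (intro allI impI)
    fix e :: real assume "e > 0"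
    then have "eventually (\<lambda>n. hausdorff \<rho> (U n) (V n) < ereal e) sequentially"
      using order_tendstoD(2)[OF L, of "ereal e"] by simp
    then show "eventually (\<lambda>n. small \<rho> (U n) (V n) e) sequentially"
      by (rule eventually_mono) (rule less_imp_small)
  qed
next
  assume R: "\<forall>e>0. eventually (\<lambda>n. small \<rho> (U n) (V n) e) sequentially"
  show "(\<lambda>n. hausdorff \<rho> (U n) (V n)) \<longlonglongrightarrow> 0"
  proof (rule order_tendstoI)
    fix a :: ereal assume "a < 0"
    have "\<And>n. a < hausdorff \<rho> (U n) (V n)"
    proof -
      fix n
      have "0 \<le> hausdorff \<rho> (U n) (V n)" by (rule haus_nonneg) (use assms in auto)
      then show "a < hausdorff \<rho> (U n) (V n)" using \<open>a < 0\<close> by (rule order.strict_trans2[rotated])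
    qed
    then show "eventually (\<lambda>n. a < hausdorff \<rho> (U n) (V n)) sequentially"
      by simp
  next
    fix a :: ereal assume "0 < a"
    then obtain z where z: "0 < ereal z" "ereal z < a" using ereal_dense2 by blast
    then have "eventually (\<lambda>n. small \<rho> (U n) (V n) z) sequentially" using R by simp
    then show "eventually (\<lambda>n. hausdorff \<rho> (U n) (V n) < a) sequentially"
      by (rule eventually_mono) (rule order.strict_trans1[OF small_imp_le z(2)])
  qed
qed

lemma dbar_nonneg: "dbar p q \<ge> 0"
  unfolding dbar_def by simp

lemma F_USC_nonneg:
  assumes "u \<in> F_USC" shows "u x \<ge> 0"
proof -
  have "fuzzy_set u" using assms unfolding F_USC_def by simp
  then show ?thesis unfolding fuzzy_set_def by simp
qed

lemma F_USC_cut0: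
  assumes "u \<in> F_USC" shows "cut u 0 \<noteq> {}"
proof -
  have "\<forall>\<alpha>\<in>{0..1}. cut u \<alpha> \<noteq> {} \<and> closed (cut u \<alpha>)" using assms unfolding F_USC_def by blast
  moreover have "(0::real) \<in> {0..1}" by simp
  ultimately show ?thesis by blast
qed

lemma cut0: "cut u 0 = closure {x. u x > 0}"
  unfolding cut_def by simp

lemma pos_in_cut0: "u x > 0 \<Longrightarrow> x \<in> cut u 0"
  unfolding cut0 using closure_subset[of "{x. u x > 0}"] by (simp add: subset_iff)

lemma endo_iff: "(x,t) \<in> endo u \<longleftrightarrow> 0 \<le> t \<and> t \<le> 1 \<and> u x \<ge> t"
  unfolding endo_def by auto

lemma sendo_iff: "(x,t) \<in> sendo u \<longleftrightarrow> 0 \<le> t \<and> t \<le> 1 \<and> u x \<ge> t \<and> x \<in> cut u 0"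
  unfolding sendo_def endo_def by auto

lemma endo_not_sendo:
  assumes "(x,t) \<in> endo u" "(x,t) \<notin> sendo u"
  shows "t = 0"
proof -
  have 1: "0 \<le> t" "t \<le> u x" using assms(1) unfolding endo_iff by auto
  have "x \<notin> cut u 0" using assms unfolding endo_iff sendo_iff by auto
  then have "\<not> u x > 0" using pos_in_cut0 by blast
  then show ?thesis using 1 by linarith
qed

lemma send_end:
  assumes "v \<in> F_USC" "w \<in> F_USC" "small dbar (sendo v) (sendo w) e" "e > 0"
  shows "small dbar (endo v) (endo w) e"
  unfolding small_def
proof (intro conjI ballI)
  fix p assume p: "p \<in> endo v"
  obtain x t where pe: "p = (x,t)" by (cases p)
  show "\<exists>b\<in>endo w. dbar p b < e"
  proof (cases "p \<in> sendo v")
    case True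
    then obtain b where "b \<in> sendo w" "dbar p b < e" using assms(3) unfolding small_def by blast
    then show ?thesis unfolding sendo_def by blast
  next
    case False
    then have "t = 0" using endo_not_sendo p pe by blast
    then have "(x,0) \<in> endo w" using F_USC_nonneg[OF assms(2)] unfolding endo_iff by simp
    moreover have "dbar p (x,0) < e" using \<open>t=0\<close> pe assms(4) unfolding dbar_def by simp
    ultimately show ?thesis by blast
  qed
next
  fix p assume p: "p \<in> endo w"
  obtain x t where pe: "p = (x,t)" by (cases p)
  show "\<exists>b\<in>endo v. dbar b p < e"
  proof (cases "p \<in> sendo w")
    case True
    then obtain b where "b \<in> sendo v" "dbar b p < e" using assms(3) unfolding small_def by blast
    then show ?thesis unfolding sendo_def by blast
  next
    case False
    then have "t = 0" using endo_not_sendo p pe by blast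
    then have "(x,0) \<in> endo v" using F_USC_nonneg[OF assms(1)] unfolding endo_iff by simp
    moreover have "dbar (x,0) p < e" using \<open>t=0\<close> pe assms(4) unfolding dbar_def by simp
    ultimately show ?thesis by blast
  qed
qed

lemma send_cut:
  assumes "v \<in> F_USC" "w \<in> F_USC" "small dbar (sendo v) (sendo w) e"
  shows "small dist (cut v 0) (cut w 0) e"
  unfolding small_def
proof (intro conjI ballI)
  fix x assume "x \<in> cut v 0"
  then have "(x,0) \<in> sendo v" using F_USC_nonneg[OF assms(1)] unfolding sendo_iff by simp
  then obtain b where b: "b \<in> sendo w" "dbar (x,0) b < e" using assms(3) unfolding small_def by blast
  obtain y s where be: "b = (y,s)" by (cases b)
  have "y \<in> cut w 0" using b unfolding be sendo_iff by simp
  moreover have "dist x y < e" using b be unfolding dbar_def by simp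
  ultimately show "\<exists>y\<in>cut w 0. dist x y < e" by blast
next
  fix x assume "x \<in> cut w 0"
  then have "(x,0) \<in> sendo w" using F_USC_nonneg[OF assms(2)] unfolding sendo_iff by simp
  then obtain b where b: "b \<in> sendo v" "dbar b (x,0) < e" using assms(3) unfolding small_def by blast
  obtain y s where be: "b = (y,s)" by (cases b)
  have "y \<in> cut v 0" using b unfolding be sendo_iff by simp
  moreover have "dist y x < e" using b be unfolding dbar_def by simp
  ultimately show "\<exists>y\<in>cut v 0. dist y x < e" by blast
qed

lemma end_cut_send_half:
  assumes "w \<in> F_USC" "\<forall>a\<in>endo v. \<exists>b\<in>endo w. dbar a b < e"
    "\<forall>a\<in>cut v 0. \<exists>b\<in>cut w 0. dist a b < e"
  shows "\<forall>a\<in>sendo v. \<exists>b\<in>sendo w. dbar a b < 2 * e"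
proof
  fix p assume p: "p \<in> sendo v"
  obtain x t where pe: "p = (x,t)" by (cases p)
  have xc: "x \<in> cut v 0" and pen: "p \<in> endo v" using p pe unfolding sendo_def by (auto simp: mem_Times_iff)
  obtain z where z: "z \<in> cut w 0" "dist x z < e" using assms(3) xc by blast
  obtain b where b: "b \<in> endo w" "dbar p b < e" using assms(2) pen by blast
  obtain y s where be: "b = (y,s)" by (cases b)
  show "\<exists>b\<in>sendo w. dbar p b < 2 * e"
  proof (cases "s > 0")
    case True
    then have "b \<in> sendo w" using b pos_in_cut0[of w y] unfolding be endo_iff sendo_iff by auto
    moreover have "dbar p b < 2 * e" using b dbar_nonneg[of p b] by linarith
    ultimately show ?thesis by blast
  next
    case False
    then have "s = 0" using b unfolding be endo_iff by auto
    have zs: "(z,0) \<in> sendo w" using z F_USC_nonneg[OF assms(1)] unfolding sendo_iff by simp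
    have "dist x y + \<bar>t - s\<bar> < e" using b(2) unfolding be pe dbar_def by simp
    then have "\<bar>t\<bar> < e" using \<open>s=0\<close> zero_le_dist[of x y] by linarith
    then have "dbar p (z,0) < 2 * e" using z(2) unfolding pe dbar_def by simp
    then show ?thesis using zs by blast
  qed
qed

lemma dbar_sym: "dbar p q = dbar q p"
  unfolding dbar_def by (simp add: dist_commute abs_minus_commute)

lemma end_cut_send:
  assumes "v \<in> F_USC" "w \<in> F_USC" "small dbar (endo v) (endo w) e"
    "small dist (cut v 0) (cut w 0) e"
  shows "small dbar (sendo v) (sendo w) (2*e)"
proof -
  have 1: "\<forall>a\<in>sendo v. \<exists>b\<in>sendo w. dbar a b < 2 * e"
    using end_cut_send_half[OF assms(2)] assms(3,4) unfolding small_def by blast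
  have "\<forall>a\<in>endo w. \<exists>b\<in>endo v. dbar a b < e" using assms(3) unfolding small_def
    by (simp add: dbar_sym)
  moreover have "\<forall>a\<in>cut w 0. \<exists>b\<in>cut v 0. dist a b < e" using assms(4) unfolding small_def
    by (simp add: dist_commute)
  ultimately have "\<forall>a\<in>sendo w. \<exists>b\<in>sendo v. dbar a b < 2 * e"
    using end_cut_send_half[OF assms(1)] by blast
  then show ?thesis using 1 unfolding small_def by (simp add: dbar_sym)
qed


lemma kliminfI: "(\<And>n. f n \<in> C n) \<Longrightarrow> f \<longlonglongrightarrow> x \<Longrightarrow> x \<in> kliminf C"
  unfolding kliminf_def mem_Collect_eq by (intro exI[of _ f]) simp

lemma kliminfE:
  assumes "x \<in> kliminf C"
  obtains f where "\<forall>n. f n \<in> C n" "f \<longlonglongrightarrow> x"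
  using assms unfolding kliminf_def by (auto simp only: mem_Collect_eq)

lemma klimsupI: "strict_mono r \<Longrightarrow> (\<And>j. f j \<in> C (r j)) \<Longrightarrow> f \<longlonglongrightarrow> x \<Longrightarrow> x \<in> klimsup C"
  unfolding klimsup_def mem_Collect_eq by (intro exI[of _ r] exI[of _ f]) simp

lemma klimsupE:
  assumes "x \<in> klimsup C"
  obtains r f where "strict_mono r" "\<forall>j. f j \<in> C (r j)" "f \<longlonglongrightarrow> x"
  using assms unfolding klimsup_def by (auto simp only: mem_Collect_eq)

lemma kliminf_sub_klimsup: "kliminf C \<subseteq> klimsup C"
  unfolding kliminf_def klimsup_def using strict_mono_id by fastforce

lemma kconv_intro: "A \<subseteq> kliminf C \<Longrightarrow> klimsup C \<subseteq> A \<Longrightarrow> kuratowski_conv C A"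
  unfolding kuratowski_conv_def using kliminf_sub_klimsup[of C] by blast

lemma kconv_D: "kuratowski_conv C A \<Longrightarrow> A \<subseteq> kliminf C \<and> klimsup C \<subseteq> A"
  unfolding kuratowski_conv_def by blast

lemma sendo_sub_endo: "sendo u \<subseteq> endo u"
  unfolding sendo_def by blast

lemma klimsup_tail:
  assumes "strict_mono r" "\<forall>j\<ge>N. f j \<in> C (r j)" "f \<longlonglongrightarrow> x"
  shows "x \<in> klimsup C"
proof -
  have "strict_mono (\<lambda>j. r (j + N))" using assms(1) unfolding strict_mono_def by simp
  moreover have "\<forall>j. f (j + N) \<in> C (r (j + N))" using assms(2) by simp
  moreover have "(\<lambda>j. f (j + N)) \<longlonglongrightarrow> x" using assms(3) by (rule LIMSEQ_ignore_initial_segment)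
  ultimately show ?thesis unfolding klimsup_def mem_Collect_eq
    by (intro exI[of _ "\<lambda>j. r (j + N)"] exI[of _ "\<lambda>j. f (j + N)"]) blast
qed

lemma part2_fwd:
  assumes u: "u \<in> F_USC" and us: "\<And>n. us n \<in> F_USC"
    and K: "kuratowski_conv (\<lambda>n. sendo (us n)) (sendo u)"
  shows "gamma_conv us u \<and> kuratowski_conv (\<lambda>n. cut (us n) 0) (cut u 0)"
proof -
  have K1: "sendo u \<subseteq> kliminf (\<lambda>n. sendo (us n))" and K2: "klimsup (\<lambda>n. sendo (us n)) \<subseteq> sendo u"
    using kconv_D[OF K] by (rule conjunct1, rule conjunct2)
  have a: "endo u \<subseteq> kliminf (\<lambda>n. endo (us n))"
  proof
    fix p assume p: "p \<in> endo u"
    obtain x t where pe: "p = (x,t)" by (cases p)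
    show "p \<in> kliminf (\<lambda>n. endo (us n))"
    proof (cases "p \<in> sendo u")
      case True
      then have "p \<in> kliminf (\<lambda>n. sendo (us n))" using K1 by blast
      then obtain f where f: "\<forall>n. f n \<in> sendo (us n)" "f \<longlonglongrightarrow> p" by (rule kliminfE)
      have "\<And>n. f n \<in> endo (us n)" using f(1) sendo_sub_endo by blast
      then show ?thesis using f(2) by (rule kliminfI)
    next
      case False
      then have "t = 0" using endo_not_sendo p pe by blast
      have "\<forall>n. (x,0) \<in> endo (us n)" using F_USC_nonneg[OF us] unfolding endo_iff by simp
      moreover have "(\<lambda>n. (x,0::real)) \<longlonglongrightarrow> p" using pe \<open>t=0\<close> by simp
      ultimately show ?thesis by (intro kliminfI[of "\<lambda>n. (x,0::real)"]) auto
    qed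
  qed
  have b: "klimsup (\<lambda>n. endo (us n)) \<subseteq> endo u"
  proof
    fix p assume "p \<in> klimsup (\<lambda>n. endo (us n))"
    then obtain r f where r: "strict_mono r" and f: "\<forall>j. f j \<in> endo (us (r j))" and lim: "f \<longlonglongrightarrow> p"
      by (rule klimsupE)
    obtain x t where pe: "p = (x,t)" by (cases p)
    have ls: "(\<lambda>j. snd (f j)) \<longlonglongrightarrow> t" using tendsto_snd[OF lim] pe by simp
    have nn: "snd (f j) \<ge> 0" for j
    proof -
      obtain a c where fe: "f j = (a,c)" by (cases "f j")
      have "(a,c) \<in> endo (us (r j))" using f[rule_format, of j] fe by simp
      then show ?thesis unfolding fe endo_iff by simp
    qed
    have "\<exists>N. \<forall>n\<ge>N. 0 \<le> snd (f n)" using nn by (intro exI[of _ 0]) simp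
    then have t0: "t \<ge> 0" by (rule LIMSEQ_le_const[OF ls])
    show "p \<in> endo u"
    proof (cases "t > 0")
      case True
      then have "eventually (\<lambda>j. snd (f j) > 0) sequentially" using order_tendstoD(1)[OF ls] by simp
      then obtain N where N: "\<forall>j\<ge>N. snd (f j) > 0" unfolding eventually_sequentially by blast
      have "\<forall>j\<ge>N. f j \<in> sendo (us (r j))"
      proof (intro allI impI)
        fix j assume "j \<ge> N"
        obtain a c where fe: "f j = (a,c)" by (cases "f j")
        have "snd (f j) > 0" using N \<open>j\<ge>N\<close> by blast
        then have c0: "c > 0" using fe by simp
        have "(a,c) \<in> endo (us (r j))" using f[rule_format, of j] fe by simp
        then have ac: "0 \<le> c" "c \<le> 1" "c \<le> us (r j) a" unfolding endo_iff by auto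
        then have "a \<in> cut (us (r j)) 0" using c0 by (intro pos_in_cut0) simp
        then show "f j \<in> sendo (us (r j))" unfolding fe sendo_iff using ac by simp
      qed
      then have "p \<in> klimsup (\<lambda>n. sendo (us n))" by (rule klimsup_tail[OF r _ lim])
      then have "p \<in> sendo u" using K2 by (rule rev_subsetD)
      then show ?thesis using sendo_sub_endo by (rule rev_subsetD)
    next
      case False
      then have "t = 0" using t0 by simp
      then show ?thesis using F_USC_nonneg[OF u, of x] unfolding pe endo_iff by simp
    qed
  qed
  have c: "cut u 0 \<subseteq> kliminf (\<lambda>n. cut (us n) 0)"
  proof
    fix x assume "x \<in> cut u 0"
    then have "(x,0) \<in> sendo u" using F_USC_nonneg[OF u] unfolding sendo_iff by simp
    then have "(x,0) \<in> kliminf (\<lambda>n. sendo (us n))" using K1 by blast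
    then obtain f where f: "\<forall>n. f n \<in> sendo (us n)" "f \<longlonglongrightarrow> (x,0)" by (rule kliminfE)
    have "\<forall>n. fst (f n) \<in> cut (us n) 0" using f(1) unfolding sendo_def by (auto simp: mem_Times_iff)
    moreover have "(\<lambda>n. fst (f n)) \<longlonglongrightarrow> x" using tendsto_fst[OF f(2)] by simp
    ultimately show "x \<in> kliminf (\<lambda>n. cut (us n) 0)" by (intro kliminfI[of "\<lambda>n. fst (f n)"]) auto
  qed
  have d: "klimsup (\<lambda>n. cut (us n) 0) \<subseteq> cut u 0"
  proof
    fix x assume "x \<in> klimsup (\<lambda>n. cut (us n) 0)"
    then obtain r g where r: "strict_mono r" and g: "\<forall>j. g j \<in> cut (us (r j)) 0" and lim: "g \<longlonglongrightarrow> x"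
      by (rule klimsupE)
    have "\<forall>j. (g j, 0) \<in> sendo (us (r j))" using g F_USC_nonneg[OF us] unfolding sendo_iff by simp
    moreover have "(\<lambda>j. (g j, 0::real)) \<longlonglongrightarrow> (x,0)" using lim by (intro tendsto_Pair) auto
    ultimately have "(x,0) \<in> klimsup (\<lambda>n. sendo (us n))" using r by (intro klimsupI[of r "\<lambda>j. (g j, 0::real)"]) auto
    then have "(x,0) \<in> sendo u" using K2 by blast
    then show "x \<in> cut u 0" unfolding sendo_iff by simp
  qed
  have "kuratowski_conv (\<lambda>n. endo (us n)) (endo u)" by (rule kconv_intro[OF a b])
  moreover have "kuratowski_conv (\<lambda>n. cut (us n) 0) (cut u 0)" by (rule kconv_intro[OF c d])
  ultimately show ?thesis unfolding gamma_conv_def by (rule conjI)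
qed

lemma part2_bwd:
  assumes u: "u \<in> F_USC" and us: "\<And>n. us n \<in> F_USC"
    and G: "gamma_conv us u" and K: "kuratowski_conv (\<lambda>n. cut (us n) 0) (cut u 0)"
  shows "kuratowski_conv (\<lambda>n. sendo (us n)) (sendo u)"
proof -
  have E1: "endo u \<subseteq> kliminf (\<lambda>n. endo (us n))" and E2: "klimsup (\<lambda>n. endo (us n)) \<subseteq> endo u"
    using kconv_D[OF G[unfolded gamma_conv_def]] by (rule conjunct1, rule conjunct2)
  have C1: "cut u 0 \<subseteq> kliminf (\<lambda>n. cut (us n) 0)" and C2: "klimsup (\<lambda>n. cut (us n) 0) \<subseteq> cut u 0"
    using kconv_D[OF K] by (rule conjunct1, rule conjunct2)
  have e: "sendo u \<subseteq> kliminf (\<lambda>n. sendo (us n))"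
  proof
    fix p assume p: "p \<in> sendo u"
    obtain x t where pe: "p = (x,t)" by (cases p)
    have xc: "x \<in> cut u 0" and pen: "p \<in> endo u" and t0: "t \<ge> 0"
      using p pe unfolding sendo_def endo_def by auto
    have "x \<in> kliminf (\<lambda>n. cut (us n) 0)" using C1 xc by blast
    then obtain g where g: "\<forall>n. g n \<in> cut (us n) 0" "g \<longlonglongrightarrow> x" by (rule kliminfE)
    have "p \<in> kliminf (\<lambda>n. endo (us n))" using E1 pen by blast
    then obtain f where f: "\<forall>n. f n \<in> endo (us n)" "f \<longlonglongrightarrow> p" by (rule kliminfE)
    have gs: "\<forall>n. (g n, 0) \<in> sendo (us n)" using g(1) F_USC_nonneg[OF us] unfolding sendo_iff by simp
    have gl: "(\<lambda>n. (g n, 0::real)) \<longlonglongrightarrow> (x,0)" using g(2) by (intro tendsto_Pair) auto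
    show "p \<in> kliminf (\<lambda>n. sendo (us n))"
    proof (cases "t > 0")
      case True
      have ls: "(\<lambda>j. snd (f j)) \<longlonglongrightarrow> t" using tendsto_snd[OF f(2)] pe by simp
      have ev: "eventually (\<lambda>j. snd (f j) > 0) sequentially" using order_tendstoD(1)[OF ls] True by simp
      define h where "h n = (if snd (f n) > 0 then f n else (g n, 0))" for n
      have "\<forall>n. h n \<in> sendo (us n)"
      proof
        fix n
        show "h n \<in> sendo (us n)"
        proof (cases "snd (f n) > 0")
          case True
          obtain a c where fe: "f n = (a,c)" by (cases "f n")
          have c0: "c > 0" using True fe by simp
          have "(a,c) \<in> endo (us n)" using f(1)[rule_format, of n] fe by simp
          then have ac: "0 \<le> c" "c \<le> 1" "c \<le> us n a" unfolding endo_iff by auto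
          then have "a \<in> cut (us n) 0" using c0 by (intro pos_in_cut0) simp
          then have "(a,c) \<in> sendo (us n)" unfolding sendo_iff using ac by simp
          then show ?thesis using True fe unfolding h_def by simp
        next
          case False
          then show ?thesis using gs unfolding h_def by simp
        qed
      qed
      moreover have "h \<longlonglongrightarrow> p"
        by (rule Lim_transform_eventually[OF f(2)]) (use ev in \<open>auto simp: h_def elim: eventually_mono\<close>)
      ultimately show ?thesis by (intro kliminfI[of h]) auto
    next
      case False
      then have "t = 0" using t0 by simp
      then show ?thesis using gs gl pe by (intro kliminfI[of "\<lambda>n. (g n, 0::real)"]) auto
    qed
  qed
  have f: "klimsup (\<lambda>n. sendo (us n)) \<subseteq> sendo u"
  proof
    fix p assume "p \<in> klimsup (\<lambda>n. sendo (us n))"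
    then obtain r f where r: "strict_mono r" and f: "\<forall>j. f j \<in> sendo (us (r j))" and lim: "f \<longlonglongrightarrow> p"
      by (rule klimsupE)
    obtain x t where pe: "p = (x,t)" by (cases p)
    have "\<forall>j. f j \<in> endo (us (r j))" using f sendo_sub_endo by blast
    then have "p \<in> klimsup (\<lambda>n. endo (us n))" using r lim by (intro klimsupI[of r f]) auto
    then have pen: "p \<in> endo u" using E2 by blast
    have "\<forall>j. fst (f j) \<in> cut (us (r j)) 0" using f unfolding sendo_def by (auto simp: mem_Times_iff)
    moreover have "(\<lambda>j. fst (f j)) \<longlonglongrightarrow> x" using tendsto_fst[OF lim] pe by simp
    ultimately have "x \<in> klimsup (\<lambda>n. cut (us n) 0)" using r by (intro klimsupI[of r "\<lambda>j. fst (f j)"]) auto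
    then have "x \<in> cut u 0" using C2 by blast
    then show "p \<in> sendo u" using pen unfolding pe endo_iff sendo_iff by simp
  qed
  show ?thesis by (rule kconv_intro[OF e f])
qed

theorem proposition4p2:
  fixes u :: "'a::metric_space \<Rightarrow> real" and us :: "nat \<Rightarrow> 'a \<Rightarrow> real"
  assumes "u \<in> F_USC" and "\<And>n. us n \<in> F_USC"
  shows "((\<lambda>n. H_send (us n) u) \<longlonglongrightarrow> 0 \<longleftrightarrow>
           (\<lambda>n. H_end (us n) u) \<longlonglongrightarrow> 0 \<and>
           (\<lambda>n. hausdorff dist (cut (us n) 0) (cut u 0)) \<longlonglongrightarrow> 0)
       \<and> (kuratowski_conv (\<lambda>n. sendo (us n)) (sendo u) \<longleftrightarrow>
           gamma_conv us u \<and> kuratowski_conv (\<lambda>n. cut (us n) 0) (cut u 0))"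
proof
  have ne1: "sendo (us n) \<noteq> {}" for n
  proof -
    obtain x where "x \<in> cut (us n) 0" using F_USC_cut0[OF assms(2)] by blast
    then have "(x,0) \<in> sendo (us n)" using F_USC_nonneg[OF assms(2)] unfolding sendo_iff by simp
    then show ?thesis by blast
  qed
  have ne2: "endo (us n) \<noteq> {}" for n
    using ne1[of n] sendo_sub_endo by blast
  have ne3: "cut (us n) 0 \<noteq> {}" for n using F_USC_cut0[OF assms(2)] .
  have S: "(\<lambda>n. H_send (us n) u) \<longlonglongrightarrow> 0 \<longleftrightarrow>
      (\<forall>e>0. eventually (\<lambda>n. small dbar (sendo (us n)) (sendo u) e) sequentially)"
    unfolding H_send_def by (rule CH[OF ne1 dbar_nonneg])
  have E: "(\<lambda>n. H_end (us n) u) \<longlonglongrightarrow> 0 \<longleftrightarrow>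
      (\<forall>e>0. eventually (\<lambda>n. small dbar (endo (us n)) (endo u) e) sequentially)"
    unfolding H_end_def by (rule CH[OF ne2 dbar_nonneg])
  have C: "(\<lambda>n. hausdorff dist (cut (us n) 0) (cut u 0)) \<longlonglongrightarrow> 0 \<longleftrightarrow>
      (\<forall>e>0. eventually (\<lambda>n. small dist (cut (us n) 0) (cut u 0) e) sequentially)"
    by (rule CH[OF ne3 zero_le_dist])
  show "(\<lambda>n. H_send (us n) u) \<longlonglongrightarrow> 0 \<longleftrightarrow>
           (\<lambda>n. H_end (us n) u) \<longlonglongrightarrow> 0 \<and>
           (\<lambda>n. hausdorff dist (cut (us n) 0) (cut u 0)) \<longlonglongrightarrow> 0"
    unfolding S E C
  proof (intro iffI conjI allI impI)
    fix e :: real assume "e > 0" and H: "\<forall>e>0. eventually (\<lambda>n. small dbar (sendo (us n)) (sendo u) e) sequentially"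
    then have "eventually (\<lambda>n. small dbar (sendo (us n)) (sendo u) e) sequentially" by blast
    then show "eventually (\<lambda>n. small dbar (endo (us n)) (endo u) e) sequentially"
      by (rule eventually_mono) (use \<open>e>0\<close> send_end[OF assms(2) assms(1)] in blast)
  next
    fix e :: real assume "e > 0" and H: "\<forall>e>0. eventually (\<lambda>n. small dbar (sendo (us n)) (sendo u) e) sequentially"
    then have "eventually (\<lambda>n. small dbar (sendo (us n)) (sendo u) e) sequentially" by blast
    then show "eventually (\<lambda>n. small dist (cut (us n) 0) (cut u 0) e) sequentially"
      by (rule eventually_mono) (rule send_cut[OF assms(2) assms(1)])
  next
    fix e :: real assume "e > 0" and H: "(\<forall>e>0. eventually (\<lambda>n. small dbar (endo (us n)) (endo u) e) sequentially) \<and>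
      (\<forall>e>0. eventually (\<lambda>n. small dist (cut (us n) 0) (cut u 0) e) sequentially)"
    then have "eventually (\<lambda>n. small dbar (endo (us n)) (endo u) (e/2)) sequentially"
      "eventually (\<lambda>n. small dist (cut (us n) 0) (cut u 0) (e/2)) sequentially" by auto
    then have "eventually (\<lambda>n. small dbar (sendo (us n)) (sendo u) (2*(e/2))) sequentially"
      by eventually_elim (rule end_cut_send[OF assms(2) assms(1)])
    then show "eventually (\<lambda>n. small dbar (sendo (us n)) (sendo u) e) sequentially" by simp
  qed
next
  show "kuratowski_conv (\<lambda>n. sendo (us n)) (sendo u) \<longleftrightarrow>
           gamma_conv us u \<and> kuratowski_conv (\<lambda>n. cut (us n) 0) (cut u 0)"
    using part2_fwd[of u us, OF assms] part2_bwd[of u us, OF assms] by blast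
qed

end
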